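(* In the setting described in the context, for every metric $d$ on $A$ with $d\in\mathcal{B}_2$ and every $x\in A$, $$d(x,\cdot)\ge\frac{d(\cdot,\cdot)}{2}.$$
   Context: $A$ is a nonempty set (possibly infinite). A metric on $A$ is a function $d:A^2\to\mathbb{R}$ such that for all $x,y,z\in A$: $d(x,y)=0$ iff $x=y$, and $d(x,y)+d(x,z)-d(y,z)\ge0$. $\mathcal{B}_1$ is a set of functions $A\to\mathbb{R}$ forming a real linear space containing all constant functions, and $\mu:\mathcal{B}_1\to\mathbb{R}$ is a linear functional with $\mu(c)=c$ for every constant function $c$ and monotone: if $f,g\in\mathcal{B}_1$ and $f\ge g$ pointwise, then $\mu(f)\ge\mu(g)$. For $f:A^2\to\mathbb{R}$ such that $y\mapsto f(x,y)$ lies in $\mathcal{B}_1$ for every $x$, write $f(x,\cdot)=\mu(y\mapsto f(x,y))$. $\mathcal{B}_2$ is a set of functions $A^2\to\mathbb{R}$ forming a real linear space that contains all constant functions and all functions $(x,y)\mapsto h(x)$ and $(x,y)\mapsto h(y)$ with $h\in\mathcal{B}_1$, and such that for every $f\in\mathcal{B}_2$: $y\mapsto f(x,y)\in\mathcal{B}_1$ for every $x$, $x\mapsto f(x,\cdot)\in\mathcal{B}_1$, and $x\mapsto f(x,x)\in\mathcal{B}_1$. For a symmetric $d\in\mathcal{B}_2$, $d(\cdot,\cdot)=\mu(x\mapsto d(x,\cdot))$ (a real number). *)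

theory Defs
  imports Complex_Main
begin

text \<open>The set A is modelled as the (nonempty) type 'a. Functions on A^2 are curried.\<close>

definition metric_on :: "('a \<Rightarrow> 'a \<Rightarrow> real) \<Rightarrow> bool" where
  "metric_on d \<longleftrightarrow> (\<forall>x y. d x y = 0 \<longleftrightarrow> x = y) \<and>
     (\<forall>x y z. d x y + d x z - d y z \<ge> 0)"

definition B1_space :: "('a \<Rightarrow> real) set \<Rightarrow> bool" where
  "B1_space B1 \<longleftrightarrow> (\<forall>c. (\<lambda>_. c) \<in> B1) \<and>
     (\<forall>f\<in>B1. \<forall>g\<in>B1. (\<lambda>x. f x + g x) \<in> B1) \<and>
     (\<forall>a. \<forall>f\<in>B1. (\<lambda>x. a * f x) \<in> B1)"

definition mean_functional :: "('a \<Rightarrow> real) set \<Rightarrow> (('a \<Rightarrow> real) \<Rightarrow> real) \<Rightarrow> bool" where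
  "mean_functional B1 \<mu> \<longleftrightarrow>
     (\<forall>f\<in>B1. \<forall>g\<in>B1. \<mu> (\<lambda>x. f x + g x) = \<mu> f + \<mu> g) \<and>
     (\<forall>a. \<forall>f\<in>B1. \<mu> (\<lambda>x. a * f x) = a * \<mu> f) \<and>
     (\<forall>c. \<mu> (\<lambda>_. c) = c) \<and>
     (\<forall>f\<in>B1. \<forall>g\<in>B1. (\<forall>x. f x \<ge> g x) \<longrightarrow> \<mu> f \<ge> \<mu> g)"

definition B2_space :: "('a \<Rightarrow> real) set \<Rightarrow> (('a \<Rightarrow> real) \<Rightarrow> real)
    \<Rightarrow> ('a \<Rightarrow> 'a \<Rightarrow> real) set \<Rightarrow> bool" where
  "B2_space B1 \<mu> B2 \<longleftrightarrow>
     (\<forall>f\<in>B2. \<forall>g\<in>B2. (\<lambda>x y. f x y + g x y) \<in> B2) \<and>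
     (\<forall>a. \<forall>f\<in>B2. (\<lambda>x y. a * f x y) \<in> B2) \<and>
     (\<forall>c. (\<lambda>_ _. c) \<in> B2) \<and>
     (\<forall>h\<in>B1. (\<lambda>x y. h x) \<in> B2 \<and> (\<lambda>x y. h y) \<in> B2) \<and>
     (\<forall>f\<in>B2. (\<forall>x. (\<lambda>y. f x y) \<in> B1) \<and> (\<lambda>x. \<mu> (\<lambda>y. f x y)) \<in> B1 \<and>
        (\<lambda>x. f x x) \<in> B1)"

text \<open>f(x,.) = mu(y |-> f(x,y)) and f(.,.) = mu(x |-> f(x,.)).\<close>
definition partial_mean :: "(('a \<Rightarrow> real) \<Rightarrow> real) \<Rightarrow> ('a \<Rightarrow> 'a \<Rightarrow> real) \<Rightarrow> 'a \<Rightarrow> real" where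
  "partial_mean \<mu> f x = \<mu> (\<lambda>y. f x y)"

definition double_mean :: "(('a \<Rightarrow> real) \<Rightarrow> real) \<Rightarrow> ('a \<Rightarrow> 'a \<Rightarrow> real) \<Rightarrow> real" where
  "double_mean \<mu> f = \<mu> (\<lambda>x. partial_mean \<mu> f x)"

end

theory Submission
  imports Defs
begin

theorem corollary1:
  fixes B1 :: "('a \<Rightarrow> real) set" and \<mu> :: "('a \<Rightarrow> real) \<Rightarrow> real"
    and B2 :: "('a \<Rightarrow> 'a \<Rightarrow> real) set" and d :: "'a \<Rightarrow> 'a \<Rightarrow> real" and x :: 'a
  assumes "B1_space B1" and "mean_functional B1 \<mu>" and "B2_space B1 \<mu> B2"
    and "metric_on d" and "d \<in> B2"
  shows "partial_mean \<mu> d x \<ge> double_mean \<mu> d / 2"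
proof -
  have tri: "\<And>y z. d y z \<le> d x y + d x z" using assms(4) unfolding metric_on_def
    by (metis diff_ge_0_iff_ge)
  have row: "\<And>y. (\<lambda>z. d y z) \<in> B1" and rowmean: "(\<lambda>y. \<mu> (\<lambda>z. d y z)) \<in> B1"
    using assms(3,5) unfolding B2_space_def by blast+
  have const: "\<And>c. (\<lambda>_. c) \<in> B1" and add: "\<And>f g. f \<in> B1 \<Longrightarrow> g \<in> B1 \<Longrightarrow> (\<lambda>x. f x + g x) \<in> B1"
    using assms(1) unfolding B1_space_def by blast+
  have madd: "\<And>f g. f \<in> B1 \<Longrightarrow> g \<in> B1 \<Longrightarrow> \<mu> (\<lambda>x. f x + g x) = \<mu> f + \<mu> g"
    and mc: "\<And>c. \<mu> (\<lambda>_. c) = c"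
    and mono: "\<And>f g. f \<in> B1 \<Longrightarrow> g \<in> B1 \<Longrightarrow> (\<forall>x. f x \<ge> g x) \<Longrightarrow> \<mu> f \<ge> \<mu> g"
    using assms(2) unfolding mean_functional_def by blast+
  let ?m = "\<mu> (\<lambda>z. d x z)"
  have step1: "\<And>y. \<mu> (\<lambda>z. d y z) \<le> d x y + ?m"
  proof -
    fix y
    have "\<mu> (\<lambda>z. d y z) \<le> \<mu> (\<lambda>z. d x y + d x z)"
      using mono[OF add[OF const row] row] tri by blast
    also have "\<dots> = d x y + ?m" using madd[OF const row] mc by simp
    finally show "\<mu> (\<lambda>z. d y z) \<le> d x y + ?m" .
  qed
  have "\<mu> (\<lambda>y. \<mu> (\<lambda>z. d y z)) \<le> \<mu> (\<lambda>y. d x y + ?m)"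
    using mono[OF add[OF row const] rowmean] step1 by blast
  also have "\<dots> = ?m + ?m" using madd[OF row const] mc by simp
  finally show ?thesis unfolding double_mean_def partial_mean_def by simp
qed

end
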